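(* Let $m,n$ be positive integers. Then $$\mathcal{N}_{\frac{n}{m}}(q)=q^d\,\mathcal{D}_{\frac{m}{n}}(q^{-1}),\qquad \mathcal{D}_{\frac{n}{m}}(q)=q^d\,\mathcal{N}_{\frac{m}{n}}(q^{-1}),$$ where $d=\max\big(\deg\mathcal{N}_{\frac{m}{n}},\deg\mathcal{D}_{\frac{m}{n}}\big)$.
   Context: The $q$-deformed rationals: $x\mapsto[x]_q$ is the unique map from $\mathbb{Q}\cup\{\infty\}$ to $\mathbb{Q}(q)\cup\{\infty\}$ (rational functions in the variable $q$) satisfying $[0]_q=0$, $[x+1]_q=q[x]_q+1$ and $[-1/x]_q=-1/(q[x]_q)$ for all $x$. For a positive rational $x$, $\mathcal{N}_x(q)$ and $\mathcal{D}_x(q)$ denote the numerator and denominator of $[x]_q$: the polynomials in $\mathbb{Z}[q]$ with no common divisor in $\mathbb{Z}[q]$ other than $\pm1$ and with positive leading coefficients such that $[x]_q=\mathcal{N}_x(q)/\mathcal{D}_x(q)$. It is known that $[\frac{n}{m}]_q=1/[\frac{m}{n}]_{q^{-1}}$. *)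

theory Defs
  imports Complex_Main "HOL-Computational_Algebra.Polynomial" "HOL-Computational_Algebra.Fraction_Field"
begin

text \<open>Rational functions Q(q) are modelled as the fraction field of rat poly.
  The value None of an option type plays the role of infinity.\<close>

type_synonym ratfun = "rat poly fract"

definition qvar :: ratfun where
  "qvar = Fract [:0, 1:] 1"

definition ext_succ :: "rat option \<Rightarrow> rat option" where
  "ext_succ x = (case x of None \<Rightarrow> None | Some r \<Rightarrow> Some (r + 1))"

definition ext_neg_inv :: "rat option \<Rightarrow> rat option" where
  "ext_neg_inv x = (case x of None \<Rightarrow> Some 0
      | Some r \<Rightarrow> (if r = 0 then None else Some (- 1 / r)))"

definition ext_qsucc :: "ratfun option \<Rightarrow> ratfun option" where
  "ext_qsucc y = (case y of None \<Rightarrow> None | Some f \<Rightarrow> Some (qvar * f + 1))"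

definition ext_qneg_inv :: "ratfun option \<Rightarrow> ratfun option" where
  "ext_qneg_inv y = (case y of None \<Rightarrow> Some 0
      | Some f \<Rightarrow> (if f = 0 then None else Some (- 1 / (qvar * f))))"

definition is_qdeform_map :: "(rat option \<Rightarrow> ratfun option) \<Rightarrow> bool" where
  "is_qdeform_map F \<longleftrightarrow> F (Some 0) = Some 0
     \<and> (\<forall>x. F (ext_succ x) = ext_qsucc (F x))
     \<and> (\<forall>x. F (ext_neg_inv x) = ext_qneg_inv (F x))"

definition qrat :: "rat \<Rightarrow> ratfun option" where
  "qrat x = (THE F. is_qdeform_map F) (Some x)"

definition qND :: "rat \<Rightarrow> int poly \<times> int poly" where
  "qND x = (THE (N, D). lead_coeff N > 0 \<and> lead_coeff D > 0
      \<and> (\<forall>c. c dvd N \<and> c dvd D \<longrightarrow> is_unit c)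
      \<and> qrat x = Some (Fract (map_poly of_int N) (map_poly of_int D)))"

definition qN :: "rat \<Rightarrow> int poly" where "qN x = fst (qND x)"
definition qD :: "rat \<Rightarrow> int poly" where "qD x = snd (qND x)"

end

theory Submission
  imports Defs "HOL-Computational_Algebra.Polynomial_Factorial"
begin

definition revp :: "nat \<Rightarrow> 'a::zero poly \<Rightarrow> 'a poly" where
  "revp k p = Abs_poly (\<lambda>i. if i \<le> k then coeff p (k - i) else 0)"

lemma coeff_revp: "coeff (revp k p) i = (if i \<le> k then coeff p (k - i) else 0)"
  unfolding revp_def coeff_Abs_poly_If_le by simp

lemma degree_revp: "degree (revp k p) \<le> k"
  by (rule degree_le) (simp add: coeff_revp)

lemma revp_revp: "degree p \<le> k \<Longrightarrow> revp k (revp k p) = p"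
proof (rule poly_eqI)
  fix n assume "degree p \<le> k"
  then show "coeff (revp k (revp k p)) n = coeff p n"
    by (cases "n \<le> k") (auto simp: coeff_revp intro!: coeff_eq_0)
qed

lemma revp_0 [simp]: "revp k 0 = 0"
  by (rule poly_eqI) (simp add: coeff_revp)

lemma revp_eq_0_iff: "degree p \<le> k \<Longrightarrow> revp k p = 0 \<longleftrightarrow> p = 0"
  by (metis revp_0 revp_revp)

lemma revp_add: "revp k (p + q) = revp k p + revp k (q::'a::comm_monoid_add poly)"
  by (rule poly_eqI) (simp add: coeff_revp)

lemma revp_minus: "revp k (- p) = - revp k (p::'a::ab_group_add poly)"
  by (rule poly_eqI) (simp add: coeff_revp)

lemma map_poly_revp: "f 0 = 0 \<Longrightarrow> map_poly f (revp k p) = revp k (map_poly f p)"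
  by (rule poly_eqI) (simp add: coeff_revp coeff_map_poly)

lemma poly_sum_le:
  assumes "degree p \<le> n"
  shows "poly p x = (\<Sum>i\<le>n. coeff p i * (x::'a::comm_semiring_1) ^ i)"
proof -
  have "poly p x = poly (\<Sum>i\<le>n. monom (coeff p i) i) x"
    using poly_as_sum_of_monoms'[OF assms] by simp
  also have "\<dots> = (\<Sum>i\<le>n. coeff p i * x ^ i)"
    by (simp add: poly_sum poly_monom)
  finally show ?thesis .
qed

lemma poly_revp:
  fixes x :: "'a::field"
  assumes "x \<noteq> 0" "degree p \<le> k"
  shows "poly (revp k p) x = x ^ k * poly p (inverse x)"
proof -
  have "poly (revp k p) x = (\<Sum>i\<le>k. coeff (revp k p) i * x ^ i)"
    by (rule poly_sum_le[OF degree_revp])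
  also have "\<dots> = (\<Sum>i\<in>{0..k}. coeff p (k - i) * x ^ i)"
    by (simp add: coeff_revp atLeast0AtMost)
  also have "\<dots> = (\<Sum>i\<in>{0..k}. coeff p i * x ^ (k - i))"
    by (subst sum.atLeastAtMost_rev) (auto intro!: sum.cong)
  also have "\<dots> = (\<Sum>i\<le>k. x ^ k * (coeff p i * inverse x ^ i))"
    by (auto simp: atLeast0AtMost power_diff assms(1) power_inverse field_simps intro!: sum.cong)
  also have "\<dots> = x ^ k * poly p (inverse x)"
    by (simp add: poly_sum_le[OF assms(2)] sum_distrib_left)
  finally show ?thesis .
qed

lemma poly_eq_nonzero:
  fixes p q :: "'a::{field_char_0} poly"
  assumes "\<And>x. x \<noteq> 0 \<Longrightarrow> poly p x = poly q x"
  shows "p = q"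
proof (rule ccontr)
  assume "p \<noteq> q"
  then have "p - q \<noteq> 0" by simp
  from poly_roots_finite[OF this] have "finite {x. poly (p - q) x = 0}" .
  moreover have "UNIV - {0} \<subseteq> {x. poly (p - q) x = 0}" using assms by auto
  ultimately have "finite (UNIV - {0::'a})" by (rule finite_subset[rotated])
  then show False using infinite_UNIV_char_0 by auto
qed

lemma revp_mult_field:
  fixes p q :: "'a::{field_char_0} poly"
  assumes "degree p \<le> k" "degree q \<le> j"
  shows "revp (k + j) (p * q) = revp k p * revp j q"
proof (rule poly_eq_nonzero)
  fix x :: 'a assume x: "x \<noteq> 0"
  have d: "degree (p * q) \<le> k + j"
    using degree_mult_le[of p q] assms by linarith
  show "poly (revp (k + j) (p * q)) x = poly (revp k p * revp j q) x"
    using x assms d by (simp add: poly_revp power_add)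
qed

lemma map_poly_of_int_add: "map_poly of_int (p + q) = map_poly of_int p + (map_poly of_int q :: 'a::ring_1 poly)"
  by (rule poly_eqI) (simp add: coeff_map_poly)

lemma map_poly_of_int_mult: "map_poly of_int (p * q) = map_poly of_int p * (map_poly of_int q :: 'a::comm_ring_1 poly)"
proof (induction p)
  case 0 then show ?case by simp
next
  case (pCons a p)
  have "map_poly of_int (pCons a p * q) = map_poly of_int (smult a q + pCons 0 (p * q))"
    by simp
  also have "\<dots> = (smult (of_int a) (map_poly of_int q) + pCons 0 (map_poly of_int p * map_poly of_int q) :: 'a poly)"
    by (simp add: map_poly_of_int_add map_poly_smult map_poly_pCons pCons.IH)
  also have "\<dots> = map_poly of_int (pCons a p) * map_poly of_int q"
    by (simp add: map_poly_pCons)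
  finally show ?case .
qed

lemma map_poly_of_int_inj: "map_poly (of_int :: int \<Rightarrow> 'a::ring_char_0) p = map_poly of_int q \<Longrightarrow> p = q"
  by (rule poly_eqI) (metis coeff_map_poly of_int_0 of_int_eq_iff)

lemma degree_map_poly_of_int [simp]: "degree (map_poly (of_int :: int \<Rightarrow> 'a::ring_char_0) p) = degree p"
  by (rule degree_map_poly) simp

lemma revp_mult_int:
  fixes p q :: "int poly"
  assumes "degree p \<le> k" "degree q \<le> j"
  shows "revp (k + j) (p * q) = revp k p * revp j q"
proof (rule map_poly_of_int_inj[where 'a=rat])
  show "map_poly (of_int :: int \<Rightarrow> rat) (revp (k + j) (p * q)) = map_poly of_int (revp k p * revp j q)"
    using assms by (simp add: map_poly_revp map_poly_of_int_mult revp_mult_field)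
qed

lemma revp_ne0: "degree p \<le> k \<Longrightarrow> p \<noteq> 0 \<Longrightarrow> revp k p \<noteq> 0"
  using revp_eq_0_iff by blast

lemma revp_Fract_eq:
  fixes a b c d :: "rat poly"
  assumes "b \<noteq> 0" "d \<noteq> 0" "a * d = c * b"
    "degree a \<le> k" "degree b \<le> k" "degree c \<le> j" "degree d \<le> j"
  shows "Fract (revp k a) (revp k b) = Fract (revp j c) (revp j d)"
proof -
  have "revp k a * revp j d = revp (k + j) (a * d)"
    using assms(4-7) by (simp add: revp_mult_field)
  also have "\<dots> = revp (j + k) (c * b)" by (metis assms(3) add.commute)
  also have "\<dots> = revp j c * revp k b"
    using assms(4-7) by (simp add: revp_mult_field)
  finally show ?thesis
    using assms by (simp add: eq_fract revp_ne0)
qed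

definition sig :: "ratfun \<Rightarrow> ratfun" where
  "sig f = (let r = (SOME r. snd r \<noteq> 0 \<and> f = Fract (fst r) (snd r));
              k = max (degree (fst r)) (degree (snd r))
            in Fract (revp k (fst r)) (revp k (snd r)))"

lemma sig_Fract:
  assumes "b \<noteq> 0" "degree a \<le> k" "degree b \<le> k"
  shows "sig (Fract a b) = Fract (revp k a) (revp k b)"
proof -
  define r where "r = (SOME r. snd r \<noteq> 0 \<and> Fract a b = Fract (fst r) (snd r))"
  have "\<exists>r. snd r \<noteq> 0 \<and> Fract a b = Fract (fst r) (snd r)"
    using assms by (intro exI[of _ "(a, b)"]) simp
  then have r: "snd r \<noteq> 0" "Fract a b = Fract (fst r) (snd r)"
    unfolding r_def by (metis (mono_tags, lifting) someI_ex)+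
  have eq: "fst r * b = a * snd r"
    using r assms by (simp add: eq_fract)
  have "sig (Fract a b) = Fract (revp (max (degree (fst r)) (degree (snd r))) (fst r))
        (revp (max (degree (fst r)) (degree (snd r))) (snd r))"
    unfolding sig_def r_def[symmetric] by (simp add: Let_def)
  also have "\<dots> = Fract (revp k a) (revp k b)"
    by (rule revp_Fract_eq) (use r assms eq in auto)
  finally show ?thesis .
qed

lemma fract_ex: "\<exists>a b. b \<noteq> 0 \<and> (f::ratfun) = Fract a b"
  by (cases f) auto

lemma sig_mult: "sig (x * y) = sig x * sig y"
proof -
  obtain a b where x: "b \<noteq> 0" "x = Fract a b" using fract_ex by blast
  obtain c d where y: "d \<noteq> 0" "y = Fract c d" using fract_ex by blast
  define k where "k = max (degree a) (degree b)"
  define j where "j = max (degree c) (degree d)"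
  have "sig (x * y) = Fract (revp (k + j) (a * c)) (revp (k + j) (b * d))"
    using x y by (auto simp: k_def j_def intro!: sig_Fract order.trans[OF degree_mult_le])
  also have "\<dots> = sig x * sig y"
  proof -
    have sx: "sig x = Fract (revp k a) (revp k b)" using x by (simp add: sig_Fract k_def)
    have sy: "sig y = Fract (revp j c) (revp j d)" using y by (simp add: sig_Fract j_def)
    have e: "revp (k + j) (a * c) = revp k a * revp j c" "revp (k + j) (b * d) = revp k b * revp j d"
      by (simp_all add: revp_mult_field k_def j_def)
    show ?thesis by (simp only: sx sy mult_fract e)
  qed
  finally show ?thesis .
qed

lemma sig_add: "sig (x + y) = sig x + sig y"
proof -
  obtain a b where x: "b \<noteq> 0" "x = Fract a b" using fract_ex by blast
  obtain c d where y: "d \<noteq> 0" "y = Fract c d" using fract_ex by blast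
  define k where "k = max (degree a) (degree b)"
  define j where "j = max (degree c) (degree d)"
  have d1: "degree (a * d) \<le> k + j" "degree (c * b) \<le> k + j" "degree (b * d) \<le> k + j"
    by (auto simp: k_def j_def intro!: order.trans[OF degree_mult_le])
  have "sig (x + y) = Fract (revp (k + j) (a * d + c * b)) (revp (k + j) (b * d))"
    using x y d1 by (auto intro!: sig_Fract order.trans[OF degree_add_le])
  also have "revp (k + j) (c * b) = revp j c * revp k b"
    using revp_mult_field[of c j b k] by (simp add: add.commute k_def j_def)
  then have "revp (k + j) (a * d + c * b) = revp k a * revp j d + revp j c * revp k b"
    by (simp add: revp_add revp_mult_field k_def j_def)
  also have "revp (k + j) (b * d) = revp k b * revp j d"
    by (simp add: revp_mult_field k_def j_def)
  also have "Fract (revp k a * revp j d + revp j c * revp k b) (revp k b * revp j d) = sig x + sig y"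
  proof -
    have sx: "sig x = Fract (revp k a) (revp k b)" using x by (simp add: sig_Fract k_def)
    have sy: "sig y = Fract (revp j c) (revp j d)" using y by (simp add: sig_Fract j_def)
    have "revp k b \<noteq> 0" "revp j d \<noteq> 0" using x y by (auto simp: revp_ne0 k_def j_def)
    then show ?thesis by (simp add: sx sy)
  qed
  finally show ?thesis .
qed

lemma revp0: "degree p = 0 \<Longrightarrow> revp 0 p = p"
proof (rule poly_eqI)
  fix n assume "degree p = 0"
  then show "coeff (revp 0 p) n = coeff p n"
    by (cases "n = 0") (auto simp: coeff_revp intro!: coeff_eq_0)
qed

lemma sig_one: "sig 1 = 1"
  unfolding One_fract_def by (subst sig_Fract[where k=0]) (auto simp: revp0)

lemma sig_zero: "sig 0 = 0"
  unfolding Zero_fract_def by (subst sig_Fract[where k=0]) (auto simp: revp0)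

lemma sig_minus: "sig (- x) = - sig x"
  by (metis add_eq_0_iff2 sig_add sig_zero)

lemma sig_sig: "sig (sig x) = x"
proof -
  obtain a b where x: "b \<noteq> 0" "x = Fract a b" using fract_ex by blast
  define k where "k = max (degree a) (degree b)"
  have "sig x = Fract (revp k a) (revp k b)" using x by (simp add: sig_Fract k_def)
  moreover have "sig (Fract (revp k a) (revp k b)) = Fract (revp k (revp k a)) (revp k (revp k b))"
    using x by (intro sig_Fract) (auto simp: k_def degree_revp revp_ne0)
  ultimately show ?thesis using x by (simp add: revp_revp k_def)
qed

lemma sig_inverse: "sig (inverse x) = inverse (sig x)"
proof -
  obtain a b where x: "b \<noteq> 0" "x = Fract a b" using fract_ex by blast
  define k where "k = max (degree a) (degree b)"
  show ?thesis
  proof (cases "a = 0")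
    case True
    have "Fract 0 b = 0" by (simp add: Zero_fract_def eq_fract(3))
    then show ?thesis using x True by (simp add: sig_zero)
  next
    case False
    then show ?thesis using x
      by (simp add: sig_Fract[where k=k] k_def max.commute)
  qed
qed

lemma qvar_ne0: "qvar \<noteq> 0"
  by (simp add: qvar_def Zero_fract_def eq_fract)

lemma sig_qvar: "sig qvar = inverse qvar"
proof -
  have "sig qvar = Fract (revp 1 [:0,1:]) (revp 1 1)"
    unfolding qvar_def by (rule sig_Fract) auto
  also have "revp 1 [:0,1:] = (1 :: rat poly)"
    by (rule poly_eqI) (auto simp: coeff_revp coeff_pCons split: nat.splits)
  also have "revp 1 1 = ([:0,1:] :: rat poly)"
    by (rule poly_eqI) (auto simp: coeff_revp coeff_pCons split: nat.splits)
  finally show ?thesis by (simp add: qvar_def)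
qed

lemma sig_eq_0_iff: "sig x = 0 \<longleftrightarrow> x = 0"
  by (metis sig_sig sig_zero)


abbreviation rp :: "int poly \<Rightarrow> real poly" where "rp \<equiv> map_poly of_int"
abbreviation ip :: "int poly \<Rightarrow> rat poly" where "ip \<equiv> map_poly of_int"

lemma map_poly_of_int_X: "map_poly of_int [:0, 1:] = ([:0, 1:] :: 'a::ring_1 poly)"
  by (simp add: map_poly_pCons)

function pq :: "nat \<Rightarrow> nat \<Rightarrow> int poly \<times> int poly" where
  "pq a b = (if a = 0 \<or> b = 0 then (0, 1) else if a = b then (1, 1)
     else if b < a then (let r = pq (a - b) b in ([:0,1:] * fst r + snd r, snd r))
     else (let r = pq b a; k = max (degree (fst r)) (degree (snd r))
           in (revp k (snd r), revp k (fst r))))"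
  by pat_completeness auto
termination
  by (relation "measure (\<lambda>(a,b). 2*(a+b) + (if a < b then 1 else 0))") auto

declare pq.simps [simp del]

lemma pq_same: "0 < a \<Longrightarrow> pq a a = (1, 1)"
  by (subst pq.simps) simp

lemma pq_gt: "0 < b \<Longrightarrow> b < a \<Longrightarrow>
  pq a b = ([:0,1:] * fst (pq (a - b) b) + snd (pq (a - b) b), snd (pq (a - b) b))"
  by (subst pq.simps) (simp add: Let_def)

lemma pq_lt: "0 < a \<Longrightarrow> a < b \<Longrightarrow>
  pq a b = (revp (max (degree (fst (pq b a))) (degree (snd (pq b a)))) (snd (pq b a)),
            revp (max (degree (fst (pq b a))) (degree (snd (pq b a)))) (fst (pq b a)))"
  by (subst pq.simps) (simp add: Let_def)

lemma pq_pos: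
  "0 < a \<Longrightarrow> 0 < b \<Longrightarrow> \<forall>t>0. 0 < poly (rp (fst (pq a b))) t \<and> 0 < poly (rp (snd (pq a b))) t"
proof (induction a b rule: pq.induct)
  case (1 a b)
  consider "a = b" | "b < a" | "a < b" by linarith
  then show ?case
  proof cases
    case 1
    then show ?thesis using \<open>0 < a\<close> by (simp add: pq_same)
  next
    case 2
    have IH: "\<forall>t>0. 0 < poly (rp (fst (pq (a - b) b))) t \<and> 0 < poly (rp (snd (pq (a - b) b))) t"
      using "1.IH"(1) "1.prems" 2 by auto
    show ?thesis
    proof (intro allI impI)
      fix t :: real assume t: "0 < t"
      show "0 < poly (rp (fst (pq a b))) t \<and> 0 < poly (rp (snd (pq a b))) t"
      proof -
        have e: "pq a b = (pCons 0 (fst (pq (a - b) b)) + snd (pq (a - b) b), snd (pq (a - b) b))"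
          using 2 "1.prems" by (simp add: pq_gt)
        have p1: "0 < poly (rp (fst (pq (a - b) b))) t" "0 < poly (rp (snd (pq (a - b) b))) t"
          using IH t by auto
        show ?thesis unfolding e using p1 t
          by (simp add: map_poly_of_int_add map_poly_pCons) (meson add_pos_pos mult_pos_pos)
      qed
    qed
  next
    case 3
    have IH: "\<forall>t>0. 0 < poly (rp (fst (pq b a))) t \<and> 0 < poly (rp (snd (pq b a))) t"
      using "1.IH"(2) "1.prems" 3 by auto
    show ?thesis
    proof (intro allI impI)
      fix t :: real assume t: "0 < t"
      define k where "k = max (degree (fst (pq b a))) (degree (snd (pq b a)))"
      have it: "0 < inverse t" using t by simp
      have e: "pq a b = (revp k (snd (pq b a)), revp k (fst (pq b a)))"
        using 3 "1.prems" by (simp add: pq_lt k_def)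
      have p1: "0 < poly (rp (fst (pq b a))) (inverse t)" "0 < poly (rp (snd (pq b a))) (inverse t)"
        using IH it by auto
      have d: "degree (rp (fst (pq b a))) \<le> k" "degree (rp (snd (pq b a))) \<le> k"
        by (simp_all add: k_def)
      show "0 < poly (rp (fst (pq a b))) t \<and> 0 < poly (rp (snd (pq a b))) t"
        unfolding e using p1 t d by (simp add: map_poly_revp poly_revp)
    qed
  qed
qed


lemma ip_ne0: "p \<noteq> 0 \<Longrightarrow> ip p \<noteq> 0"
  using map_poly_of_int_inj[of p 0] by auto

lemma pq_ne0: "0 < a \<Longrightarrow> 0 < b \<Longrightarrow> fst (pq a b) \<noteq> 0 \<and> snd (pq a b) \<noteq> 0"
  using pq_pos[of a b] by (metis poly_0 less_irrefl map_poly_0 zero_less_one)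

definition V :: "nat \<Rightarrow> nat \<Rightarrow> ratfun" where
  "V a b = Fract (ip (fst (pq a b))) (ip (snd (pq a b)))"

lemma V_ne0: "0 < a \<Longrightarrow> 0 < b \<Longrightarrow> V a b \<noteq> 0"
  using pq_ne0[of a b] ip_ne0 by (simp add: V_def Zero_fract_def eq_fract)

lemma V_same: "0 < a \<Longrightarrow> V a a = 1"
  by (simp add: V_def pq_same One_fract_def)

lemma V_gt:
  assumes "0 < b" "b < a"
  shows "V a b = qvar * V (a - b) b + 1"
proof -
  define N where "N = fst (pq (a - b) b)"
  define D where "D = snd (pq (a - b) b)"
  have D: "ip D \<noteq> 0" using pq_ne0[of "a - b" b] assms ip_ne0 by (auto simp: D_def)
  have "V a b = Fract (ip ([:0,1:] * N + D)) (ip D)"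
    using assms by (simp add: V_def pq_gt N_def D_def)
  also have "\<dots> = Fract ([:0,1:] * ip N + ip D) (ip D)"
    by (simp add: map_poly_of_int_add map_poly_pCons)
  also have "\<dots> = qvar * V (a - b) b + 1"
    using D by (simp add: V_def qvar_def One_fract_def N_def[symmetric] D_def[symmetric])
  finally show ?thesis .
qed

lemma V_lt:
  assumes "0 < a" "a < b"
  shows "V a b = inverse (sig (V b a))"
proof -
  define N where "N = fst (pq b a)"
  define D where "D = snd (pq b a)"
  define k where "k = max (degree N) (degree D)"
  have D: "ip D \<noteq> 0" using pq_ne0[of b a] assms ip_ne0 by (auto simp: D_def)
  have "V a b = Fract (ip (revp k D)) (ip (revp k N))"
    using assms by (simp add: V_def pq_lt N_def D_def k_def)
  also have "\<dots> = inverse (Fract (revp k (ip N)) (revp k (ip D)))"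
    by (simp add: map_poly_revp)
  also have "Fract (revp k (ip N)) (revp k (ip D)) = sig (V b a)"
    unfolding V_def N_def[symmetric] D_def[symmetric]
    by (rule sig_Fract[symmetric]) (use D in \<open>auto simp: k_def\<close>)
  finally show ?thesis .
qed

lemma V_recip:
  assumes "0 < a" "0 < b"
  shows "V b a = inverse (sig (V a b))"
proof -
  consider "a = b" | "a < b" | "b < a" by linarith
  then show ?thesis
  proof cases
    case 1 then show ?thesis using assms by (simp add: V_same sig_one)
  next
    case 2
    then have "V a b = inverse (sig (V b a))" using V_lt assms by simp
    then have "sig (V a b) = inverse (V b a)" by (simp add: sig_inverse sig_sig)
    then show ?thesis by simp
  next
    case 3 then show ?thesis using V_lt assms by simp
  qed
qed

lemma pq_scale: "0 < c \<Longrightarrow> pq (c * a) (c * b) = pq a b"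
proof (induction a b rule: pq.induct)
  case (1 a b)
  consider "a = 0 \<or> b = 0" | "a \<noteq> 0" "b \<noteq> 0" "a = b" | "a \<noteq> 0" "b \<noteq> 0" "b < a"
    | "a \<noteq> 0" "b \<noteq> 0" "a < b" by linarith
  then show ?case
  proof cases
    case 1 then show ?thesis using "1.prems" by (subst (1 2) pq.simps) auto
  next
    case 2 then show ?thesis using "1.prems" by (simp add: pq_same)
  next
    case 3
    have "pq (c * (a - b)) (c * b) = pq (a - b) b" using "1.IH"(1) 3 "1.prems" by auto
    then show ?thesis using 3 "1.prems" by (simp add: pq_gt diff_mult_distrib2[symmetric])
  next
    case 4
    have "pq (c * b) (c * a) = pq b a" using "1.IH"(2) 4 "1.prems" by auto
    then show ?thesis using 4 "1.prems" by (simp add: pq_lt)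
  qed
qed

lemma V_scale: "0 < c \<Longrightarrow> V (c * a) (c * b) = V a b"
  by (simp add: V_def pq_scale)

definition Fp :: "rat \<Rightarrow> ratfun" where
  "Fp x = V (nat (fst (quotient_of x))) (nat (snd (quotient_of x)))"

lemma Fp_eq:
  assumes "0 < a" "0 < b"
  shows "Fp (of_nat a / of_nat b) = V a b"
proof -
  define x :: rat where "x = of_nat a / of_nat b"
  obtain p q where pq: "quotient_of x = (p, q)" by (cases "quotient_of x")
  have q: "0 < q" using quotient_of_denom_pos[OF pq] .
  have xe: "x = of_int p / of_int q" using quotient_of_div[OF pq] .
  have "0 < x" using assms by (simp add: x_def)
  then have p: "0 < p" using q xe by (simp add: zero_less_divide_iff)
  have "of_nat a / of_nat b = (of_int p / of_int q :: rat)" using xe by (simp add: x_def)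
  then have "of_nat a * of_int q = (of_int p * of_nat b :: rat)"
    using assms q by (subst (asm) frac_eq_eq) auto
  then have "rat_of_int (int a * q) = rat_of_int (p * int b)" by simp
  then have "int a * q = p * int b" by (simp only: of_int_eq_iff)
  then have "int (a * nat q) = int (nat p * b)" using p q by simp
  then have e: "a * nat q = nat p * b" by (simp only: of_nat_eq_iff)
  have "Fp x = V (nat p) (nat q)" by (simp add: Fp_def pq)
  also have "\<dots> = V (b * nat p) (b * nat q)" using assms by (simp add: V_scale)
  also have "\<dots> = V (nat q * a) (nat q * b)" using e by (simp add: mult.commute)
  also have "\<dots> = V a b" using q by (simp add: V_scale)
  finally show ?thesis by (simp add: x_def)
qed

lemma pos_rat_ex: "0 < (x::rat) \<Longrightarrow> \<exists>a b. 0 < a \<and> 0 < b \<and> x = of_nat a / of_nat b"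
proof -
  assume x: "0 < x"
  obtain p q where pq: "quotient_of x = (p, q)" by (cases "quotient_of x")
  have q: "0 < q" using quotient_of_denom_pos[OF pq] .
  have xe: "x = of_int p / of_int q" using quotient_of_div[OF pq] .
  then have p: "0 < p" using q x by (simp add: zero_less_divide_iff)
  show ?thesis
    by (rule exI[of _ "nat p"], rule exI[of _ "nat q"]) (use p q xe in auto)
qed


lemma Fp_ne0:
  assumes "0 < x" shows "Fp x \<noteq> 0"
proof -
  obtain a b where ab: "0 < a" "0 < b" "x = of_nat a / of_nat b" using pos_rat_ex[OF assms] by blast
  have "Fp x = V a b" unfolding ab(3) by (rule Fp_eq[OF ab(1,2)])
  then show ?thesis using V_ne0[OF ab(1,2)] by simp
qed

lemma Fp_succ:
  assumes "0 < x" shows "Fp (x + 1) = qvar * Fp x + 1"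
proof -
  obtain a b where ab: "0 < a" "0 < b" "x = of_nat a / of_nat b" using pos_rat_ex[OF assms] by blast
  have e: "x + 1 = of_nat (a + b) / of_nat b" using ab by (simp add: add_divide_distrib)
  have "Fp (x + 1) = V (a + b) b" unfolding e by (rule Fp_eq) (use ab in auto)
  also have "\<dots> = qvar * V a b + 1" using V_gt[of b "a + b"] ab by simp
  also have "V a b = Fp x" unfolding ab(3) by (rule Fp_eq[OF ab(1,2), symmetric])
  finally show ?thesis .
qed

lemma Fp_one: "Fp 1 = 1"
  using Fp_eq[of 1 1] by (simp add: V_same)

lemma Fp_inv:
  assumes "0 < x" shows "Fp (inverse x) = inverse (sig (Fp x))"
proof -
  obtain a b where ab: "0 < a" "0 < b" "x = of_nat a / of_nat b" using pos_rat_ex[OF assms] by blast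
  have e: "inverse x = of_nat b / of_nat a" using ab by simp
  have "Fp (inverse x) = V b a" unfolding e by (rule Fp_eq) (use ab in auto)
  also have "\<dots> = inverse (sig (V a b))" using ab by (intro V_recip)
  also have "V a b = Fp x" unfolding ab(3) by (rule Fp_eq[OF ab(1,2), symmetric])
  finally show ?thesis .
qed

lemma Fp_refl:
  assumes "0 < y" "y < 1" shows "Fp (1 - y) = 1 - sig (Fp y)"
proof -
  obtain b a where ab: "0 < b" "0 < a" "y = of_nat b / of_nat a" using pos_rat_ex[OF assms(1)] by blast
  have ba: "b < a" using assms(2) ab by simp
  have e: "1 - y = of_nat (a - b) / of_nat a" using ab ba by (simp add: field_simps of_nat_diff)
  have "Fp (1 - y) = V (a - b) a" unfolding e by (rule Fp_eq) (use ab ba in auto)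
  also have "\<dots> = inverse (sig (V a (a - b)))" using ab ba by (intro V_recip) auto
  also have "V a (a - b) = qvar * V b (a - b) + 1" using V_gt[of "a - b" a] ab ba by simp
  also have "V b (a - b) = inverse (sig (V (a - b) b))" using ab ba by (intro V_recip) auto
  finally have e1: "Fp (1 - y) = inverse (inverse qvar * inverse (V (a - b) b) + 1)"
    by (simp add: sig_add sig_mult sig_qvar sig_inverse sig_sig sig_one)
  have "Fp y = V b a" using ab by (simp add: Fp_eq)
  also have "\<dots> = inverse (sig (V a b))" using ab by (intro V_recip)
  finally have e2: "sig (Fp y) = inverse (qvar * V (a - b) b + 1)"
    using ab ba V_gt[of b a] by (simp add: sig_inverse sig_sig)
  have P: "V (a - b) b \<noteq> 0" using ab ba V_ne0 by simp
  have P2: "qvar * V (a - b) b + 1 \<noteq> 0" using V_ne0[of a b] ab ba V_gt[of b a] by simp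
  have q: "qvar \<noteq> 0" by (rule qvar_ne0)
  show ?thesis unfolding e1 e2 using P P2 q
    by (simp add: field_simps)
qed

definition Gv :: "rat \<Rightarrow> ratfun" where
  "Gv x = (if x = 0 then 0 else if 0 < x then Fp x else - (inverse qvar * sig (Fp (- x))))"

definition Fmap :: "rat option \<Rightarrow> ratfun option" where
  "Fmap y = (case y of None \<Rightarrow> None | Some x \<Rightarrow> Some (Gv x))"

lemma Gv_ne0: "x \<noteq> 0 \<Longrightarrow> Gv x \<noteq> 0"
  using Fp_ne0[of x] Fp_ne0[of "-x"] qvar_ne0 by (auto simp: Gv_def sig_eq_0_iff)

lemma Gv_succ: "Gv (x + 1) = qvar * Gv x + 1"
proof -
  have q: "qvar \<noteq> 0" by (rule qvar_ne0)
  consider "x = 0" | "0 < x" | "x = -1" | "x < -1" | "-1 < x" "x < 0" by linarith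
  then show ?thesis
  proof cases
    case 1 then show ?thesis by (simp add: Gv_def Fp_one)
  next
    case 2
    then have "0 < x + 1" by simp
    then show ?thesis using 2 by (simp add: Gv_def Fp_succ)
  next
    case 3 then show ?thesis using q by (simp add: Gv_def Fp_one sig_one)
  next
    case 4
    have y: "0 < - x - 1" using 4 by simp
    have e: "- x = (- x - 1) + 1" by simp
    have f: "Fp (- x) = qvar * Fp (- x - 1) + 1" by (subst e, rule Fp_succ[OF y])
    define P where "P = sig (Fp (- x - 1))"
    have g1: "Gv (x + 1) = - (inverse qvar * sig (Fp (- (x + 1))))" unfolding Gv_def using 4 by simp
    have m: "- (x + 1) = - x - 1" by simp
    have g2: "Gv x = - (inverse qvar * sig (Fp (- x)))" unfolding Gv_def using 4 by simp
    have s: "sig (Fp (- x)) = inverse qvar * P + 1"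
      unfolding f P_def by (simp add: sig_add sig_mult sig_qvar sig_one)
    show ?thesis unfolding g1 g2 m s P_def[symmetric] using q by (simp add: field_simps)
  next
    case 5
    have "Fp (1 - (- x)) = 1 - sig (Fp (- x))" using 5 by (intro Fp_refl) auto
    moreover have qq: "\<And>z. qvar * (inverse qvar * z) = z" using q by (simp add: field_simps)
    ultimately show ?thesis using 5 by (simp add: Gv_def algebra_simps qq)
  qed
qed

lemma Gv_neg_inv:
  assumes "r \<noteq> 0" shows "Gv (- 1 / r) = - 1 / (qvar * Gv r)"
proof -
  have q: "qvar \<noteq> 0" by (rule qvar_ne0)
  consider "0 < r" | "r < 0" using assms by linarith
  then show ?thesis
  proof cases
    case 1
    have "Fp (inverse r) = inverse (sig (Fp r))" using 1 by (rule Fp_inv)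
    then have "sig (Fp (inverse r)) = inverse (Fp r)" by (simp add: sig_inverse sig_sig)
    then show ?thesis using 1 q by (simp add: Gv_def field_simps)
  next
    case 2
    have "Fp (inverse (- r)) = inverse (sig (Fp (- r)))" using 2 by (intro Fp_inv) simp
    moreover have "sig (Fp (- r)) \<noteq> 0" using 2 Fp_ne0[of "-r"] by (simp add: sig_eq_0_iff)
    ultimately show ?thesis using 2 q by (simp add: Gv_def field_simps)
  qed
qed

lemma Fmap_ok: "is_qdeform_map Fmap"
  unfolding is_qdeform_map_def
proof (intro conjI allI)
  show "Fmap (Some 0) = Some 0" by (simp add: Fmap_def Gv_def)
next
  fix x show "Fmap (ext_succ x) = ext_qsucc (Fmap x)"
    by (cases x) (simp_all add: Fmap_def ext_succ_def ext_qsucc_def Gv_succ)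
next
  fix x show "Fmap (ext_neg_inv x) = ext_qneg_inv (Fmap x)"
  proof (cases x)
    case None then show ?thesis by (simp add: Fmap_def ext_neg_inv_def ext_qneg_inv_def Gv_def)
  next
    case (Some r)
    then show ?thesis
    proof (cases "r = 0")
      case True then show ?thesis using Some by (simp add: Fmap_def ext_neg_inv_def ext_qneg_inv_def Gv_def)
    next
      case False
      then have "Fmap (ext_neg_inv x) = Some (Gv (- 1 / r))" using Some by (simp add: Fmap_def ext_neg_inv_def)
      also have "\<dots> = Some (- 1 / (qvar * Gv r))" using Gv_neg_inv[OF False] by simp
      also have "\<dots> = ext_qneg_inv (Fmap x)" using Some False Gv_ne0[of r]
        by (simp add: Fmap_def ext_qneg_inv_def)
      finally show ?thesis .
    qed
  qed
qed


lemma ext_qsucc_inj: "ext_qsucc u = ext_qsucc v \<Longrightarrow> u = v"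
  using qvar_ne0 by (cases u; cases v) (auto simp: ext_qsucc_def)

lemma qd_unique:
  assumes F: "is_qdeform_map F" and G: "is_qdeform_map G"
  shows "F = G"
proof -
  have sF: "F (Some (y + 1)) = ext_qsucc (F (Some y))" for y
  proof -
    have "F (ext_succ (Some y)) = ext_qsucc (F (Some y))" using F unfolding is_qdeform_map_def by blast
    then show ?thesis by (simp add: ext_succ_def)
  qed
  have sG: "G (Some (y + 1)) = ext_qsucc (G (Some y))" for y
  proof -
    have "G (ext_succ (Some y)) = ext_qsucc (G (Some y))" using G unfolding is_qdeform_map_def by blast
    then show ?thesis by (simp add: ext_succ_def)
  qed
  have nF: "F (Some (- 1 / y)) = ext_qneg_inv (F (Some y))" if "y \<noteq> 0" for y
  proof -
    have "F (ext_neg_inv (Some y)) = ext_qneg_inv (F (Some y))" using F unfolding is_qdeform_map_def by blast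
    then show ?thesis using that by (simp add: ext_neg_inv_def)
  qed
  have nG: "G (Some (- 1 / y)) = ext_qneg_inv (G (Some y))" if "y \<noteq> 0" for y
  proof -
    have "G (ext_neg_inv (Some y)) = ext_qneg_inv (G (Some y))" using G unfolding is_qdeform_map_def by blast
    then show ?thesis using that by (simp add: ext_neg_inv_def)
  qed
  have z: "F (Some 0) = G (Some 0)" using F G unfolding is_qdeform_map_def by simp
  have sh: "F (Some y) = G (Some y) \<longleftrightarrow> F (Some (y + 1)) = G (Some (y + 1))" for y
  proof
    assume "F (Some y) = G (Some y)"
    then show "F (Some (y + 1)) = G (Some (y + 1))" by (simp only: sF sG)
  next
    assume "F (Some (y + 1)) = G (Some (y + 1))"
    then have "ext_qsucc (F (Some y)) = ext_qsucc (G (Some y))" by (simp only: sF sG)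
    then show "F (Some y) = G (Some y)" by (rule ext_qsucc_inj)
  qed
  have shk: "F (Some y) = G (Some y) \<longleftrightarrow> F (Some (y + of_int k)) = G (Some (y + of_int k))"
    for y and k :: int
  proof (induction k rule: int_induct[where k=0])
    case base then show ?case by simp
  next
    case (step1 i)
    have e: "y + of_int (i + 1) = (y + of_int i) + 1" by simp
    show ?case unfolding e using step1 sh[of "y + of_int i"] by blast
  next
    case (step2 i)
    have e: "y + of_int i = (y + of_int (i - 1)) + 1" by simp
    show ?case using step2 sh[of "y + of_int (i - 1)"] unfolding e by blast
  qed
  have ints: "F (Some (of_int k)) = G (Some (of_int k))" for k :: int
    using shk[of 0 k] z by simp
  have main: "\<forall>a::int. F (Some (of_int a / of_int (int b))) = G (Some (of_int a / of_int (int b)))"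
    if "0 < b" for b :: nat
    using that
  proof (induction b rule: less_induct)
    case (less b)
    show ?case
    proof
      fix a :: int
      define k where "k = a div int b"
      define c where "c = a mod int b"
      have c: "0 \<le> c" "c < int b" using less.prems by (auto simp: c_def)
      have ak: "of_int a / of_int (int b) = (of_int c / of_int (int b) :: rat) + of_int k"
      proof -
        have "a = int b * k + c" by (simp add: k_def c_def)
        then show ?thesis using less.prems by (simp add: field_simps)
      qed
      have cc: "F (Some (of_int c / of_int (int b))) = G (Some (of_int c / of_int (int b)))"
      proof (cases "c = 0")
        case True then show ?thesis using z by simp
      next
        case False
        then have c0: "0 < c" using c by simp
        define y :: rat where "y = of_int (- int b) / of_int (int (nat c))"
        have IH0: "\<forall>a. F (Some (of_int a / of_int (int (nat c)))) = G (Some (of_int a / of_int (int (nat c))))"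
          using less.IH[of "nat c"] c c0 by simp
        have IH: "F (Some y) = G (Some y)"
          unfolding y_def using IH0 by blast
        have y0: "y \<noteq> 0" using c0 less.prems by (simp add: y_def)
        have e: "- 1 / y = of_int c / of_int (int b)" using c0 less.prems by (simp add: y_def)
        have "F (Some (- 1 / y)) = G (Some (- 1 / y))" using nF[OF y0] nG[OF y0] IH by simp
        then show ?thesis by (simp only: e)
      qed
      show "F (Some (of_int a / of_int (int b))) = G (Some (of_int a / of_int (int b)))"
        unfolding ak using shk cc by blast
    qed
  qed
  have all: "F (Some x) = G (Some x)" for x
  proof -
    obtain p q where pq: "quotient_of x = (p, q)" by (cases "quotient_of x")
    have q: "0 < q" using quotient_of_denom_pos[OF pq] .
    have xe: "x = of_int p / of_int (int (nat q))" using quotient_of_div[OF pq] q by simp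
    show ?thesis unfolding xe using main[of "nat q"] q by simp
  qed
  have none: "F None = G None"
  proof -
    have e: "ext_neg_inv (Some 0) = None" by (simp add: ext_neg_inv_def)
    have "F (ext_neg_inv (Some 0)) = ext_qneg_inv (F (Some 0))" using F unfolding is_qdeform_map_def by blast
    moreover have "G (ext_neg_inv (Some 0)) = ext_qneg_inv (G (Some 0))" using G unfolding is_qdeform_map_def by blast
    ultimately show ?thesis using z unfolding e by simp
  qed
  show ?thesis
  proof
    fix x show "F x = G x" using all none by (cases x) auto
  qed
qed

lemma qrat_eq: "qrat x = Some (Gv x)"
proof -
  have "(THE F. is_qdeform_map F) = Fmap"
    by (rule the_equality[of is_qdeform_map Fmap]) (simp_all add: qd_unique Fmap_ok)
  then show ?thesis by (simp add: qrat_def Fmap_def)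
qed

lemma qrat_pos: "0 < m \<Longrightarrow> 0 < n \<Longrightarrow> qrat (of_nat m / of_nat n) = Some (V m n)"
  by (simp add: qrat_eq Gv_def Fp_eq)


definition spec :: "rat \<Rightarrow> int poly \<Rightarrow> int poly \<Rightarrow> bool" where
  "spec x N D \<longleftrightarrow> lead_coeff N > 0 \<and> lead_coeff D > 0
      \<and> (\<forall>c. c dvd N \<and> c dvd D \<longrightarrow> is_unit c)
      \<and> qrat x = Some (Fract (map_poly of_int N) (map_poly of_int D))"

lemma spec_unique:
  assumes s1: "spec x N1 D1" and s2: "spec x N2 D2"
  shows "N1 = N2 \<and> D1 = D2"
proof -
  have l: "lead_coeff N1 > 0" "lead_coeff D1 > 0" "lead_coeff N2 > 0" "lead_coeff D2 > 0"
    using assms by (auto simp: spec_def)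
  have nz: "N1 \<noteq> 0" "D1 \<noteq> 0" "N2 \<noteq> 0" "D2 \<noteq> 0" using l by auto
  have c1: "coprime N1 D1" "coprime N2 D2" using assms by (auto simp: spec_def coprime_def)
  have "Fract (ip N1) (ip D1) = Fract (ip N2) (ip D2)" using assms by (simp add: spec_def)
  then have "ip N1 * ip D2 = ip N2 * ip D1" using nz ip_ne0 by (simp add: eq_fract)
  then have "ip (N1 * D2) = ip (N2 * D1)" by (simp add: map_poly_of_int_mult)
  then have e: "N1 * D2 = N2 * D1" by (rule map_poly_of_int_inj)
  have "N1 dvd N2 * D1" by (metis e dvd_triv_left)
  then have d1: "N1 dvd N2" using c1(1) coprime_dvd_mult_left_iff by blast
  have "N2 dvd N1 * D2" by (metis e dvd_triv_left)
  then have d2: "N2 dvd N1" using c1(2) coprime_dvd_mult_left_iff by blast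
  obtain u where u: "N2 = N1 * u" using d1 by (auto elim: dvdE)
  obtain v where v: "N1 = N2 * v" using d2 by (auto elim: dvdE)
  have "N1 * (u * v) = N1 * 1" using u v by (simp add: mult.assoc[symmetric])
  then have "u * v = 1" using nz(1) mult_cancel_left by blast
  then have "u dvd 1" by (metis dvd_triv_left)
  then obtain c where c: "u = [:c:]" "c dvd 1" using is_unit_poly_iff by blast
  have "lead_coeff N2 = lead_coeff N1 * c" using u c by (simp add: lead_coeff_mult)
  then have "0 < c" using l by (simp add: zero_less_mult_iff)
  then have "c = 1" using c(2) by simp
  then have NN: "N1 = N2" using u c by simp
  then have "N1 * D2 = N1 * D1" using e by simp
  then have "D1 = D2" using nz(1) by simp
  with NN show ?thesis by simp
qed

lemma spec_qND:
  assumes "spec x N D" shows "qND x = (N, D)"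
  unfolding qND_def
proof (rule the_equality)
  show "case (N, D) of (N, D) \<Rightarrow> 0 < lead_coeff N \<and> 0 < lead_coeff D
      \<and> (\<forall>c. c dvd N \<and> c dvd D \<longrightarrow> is_unit c)
      \<and> qrat x = Some (Fract (map_poly of_int N) (map_poly of_int D))"
    using assms by (simp add: spec_def)
next
  fix p assume "case p of (N, D) \<Rightarrow> 0 < lead_coeff N \<and> 0 < lead_coeff D
      \<and> (\<forall>c. c dvd N \<and> c dvd D \<longrightarrow> is_unit c)
      \<and> qrat x = Some (Fract (map_poly of_int N) (map_poly of_int D))"
  then have "spec x (fst p) (snd p)" by (cases p) (simp add: spec_def)
  then show "p = (N, D)" using spec_unique[OF _ assms] by (cases p) auto
qed

lemma pos_lead:
  fixes p :: "real poly"
  assumes "\<forall>t>0. 0 < poly p t"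
  shows "0 < lead_coeff p"
proof (rule ccontr)
  assume "\<not> 0 < lead_coeff p"
  have "p \<noteq> 0" using assms by (metis poly_0 less_irrefl zero_less_one)
  then have "lead_coeff p \<noteq> 0" by simp
  then have "lead_coeff p < 0" using \<open>\<not> 0 < lead_coeff p\<close> by linarith
  then have "0 < lead_coeff (- p)" by simp
  from poly_pinfty_gt_lc[OF this] obtain n where n: "\<forall>x\<ge>n. lead_coeff (- p) \<le> poly (- p) x" by blast
  have "lead_coeff (- p) \<le> poly (- p) (max n 1)" using n by simp
  then have "poly p (max n 1) < 0" using \<open>0 < lead_coeff (- p)\<close> by simp
  moreover have "0 < poly p (max n 1)" using assms by simp
  ultimately show False by simp
qed

lemma pos_each:
  fixes p r :: "real poly"
  assumes "0 < lead_coeff p" "\<forall>t>0. 0 < poly p t * poly r t"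
  shows "\<forall>t>0. 0 < poly p t"
proof (intro allI impI)
  fix t :: real assume t: "0 < t"
  show "0 < poly p t"
  proof (rule ccontr)
    assume "\<not> 0 < poly p t"
    moreover have "poly p t \<noteq> 0" using assms(2) t by (metis mult_zero_left less_irrefl)
    ultimately have neg: "poly p t < 0" by simp
    from poly_pinfty_gt_lc[OF assms(1)] obtain n where n: "\<forall>x\<ge>n. lead_coeff p \<le> poly p x" by blast
    define b where "b = max n (t + 1)"
    have "0 < poly p b" using n assms(1) by (simp add: b_def) (meson max.cobounded1 less_le_trans)
    have tb: "t < b" by (simp add: b_def)
    from poly_IVT_pos[OF tb neg \<open>0 < poly p b\<close>] obtain x where x: "t < x" "x < b" "poly p x = 0"
      by blast
    then show False using assms(2) t by (metis mult_zero_left less_irrefl less_trans)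
  qed
qed

lemma lead_rp: "lead_coeff (rp p) = of_int (lead_coeff p)"
  by (simp add: coeff_map_poly)

lemma spec_exists:
  assumes m: "0 < m" and n: "0 < n"
  shows "\<exists>N D. spec (of_nat m / of_nat n) N D \<and> (\<forall>t>0. 0 < poly (rp N) t \<and> 0 < poly (rp D) t)"
proof -
  define Np where "Np = fst (pq m n)"
  define Dp where "Dp = snd (pq m n)"
  have P: "\<forall>t>0. 0 < poly (rp Np) t \<and> 0 < poly (rp Dp) t" using pq_pos[OF m n] by (simp add: Np_def Dp_def)
  have Np0: "Np \<noteq> 0" using pq_ne0[OF m n] by (simp add: Np_def)
  define g where "g = gcd Np Dp"
  define N' where "N' = Np div g"
  define D' where "D' = Dp div g"
  have gN: "Np = g * N'" by (simp add: N'_def g_def)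
  have gD: "Dp = g * D'" by (simp add: D'_def g_def)
  have cop: "coprime N' D'" unfolding N'_def D'_def g_def by (rule div_gcd_coprime) (use Np0 in simp)
  have prod: "\<forall>t>0. 0 < poly (rp (N' * D')) t"
  proof (intro allI impI)
    fix t :: real assume t: "0 < t"
    have "0 < poly (rp Np) t * poly (rp Dp) t" using P t by simp
    also have "poly (rp Np) t * poly (rp Dp) t = (poly (rp g) t)^2 * poly (rp (N' * D')) t"
      unfolding gN gD by (simp add: map_poly_of_int_mult power2_eq_square)
    finally show "0 < poly (rp (N' * D')) t" by (simp add: zero_less_mult_iff)
  qed
  have "0 < lead_coeff (rp (N' * D'))" by (rule pos_lead[OF prod])
  then have "(0::real) < of_int (lead_coeff N' * lead_coeff D')" using lead_rp[of "N' * D'"] by (simp add: lead_coeff_mult)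
  then have lp: "0 < lead_coeff N' * lead_coeff D'" by (simp only: of_int_0_less_iff)
  define N where "N = (if 0 < lead_coeff N' then N' else - N')"
  define D where "D = (if 0 < lead_coeff N' then D' else - D')"
  have ND: "N * D = N' * D'" by (simp add: N_def D_def)
  have lN: "0 < lead_coeff N" "0 < lead_coeff D" using lp
    by (auto simp: N_def D_def zero_less_mult_iff)
  have cop2: "coprime N D" using cop by (simp add: N_def D_def)
  have prod2: "\<forall>t>0. 0 < poly (rp N) t * poly (rp D) t"
    using prod by (simp add: ND[symmetric] map_poly_of_int_mult)
  have posN: "\<forall>t>0. 0 < poly (rp N) t"
    by (rule pos_each[OF _ prod2]) (use lead_rp[of N] lN in simp)
  have prod3: "\<forall>t>0. 0 < poly (rp D) t * poly (rp N) t" using prod2 by (simp add: mult.commute)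
  have posD: "\<forall>t>0. 0 < poly (rp D) t"
    by (rule pos_each[OF _ prod3]) (use lead_rp[of D] lN in simp)
  have cross: "Np * D = N * Dp"
    by (simp add: N_def D_def gN gD mult_ac)
  have Dp0: "Dp \<noteq> 0" using pq_ne0[OF m n] by (simp add: Dp_def)
  have D0: "D \<noteq> 0" using lN by auto
  have "Fract (ip Np) (ip Dp) = Fract (ip N) (ip D)"
    using ip_ne0[OF Dp0] ip_ne0[OF D0] cross
    by (simp add: eq_fract map_poly_of_int_mult[symmetric])
  then have "qrat (of_nat m / of_nat n) = Some (Fract (ip N) (ip D))"
    using qrat_pos[OF m n] by (simp add: V_def Np_def Dp_def)
  then have "spec (of_nat m / of_nat n) N D"
    using lN cop2 by (simp add: spec_def coprime_def)
  then show ?thesis using posN posD by blast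
qed


lemma revp_coprime:
  fixes N D :: "int poly"
  assumes cop: "\<forall>c. c dvd N \<and> c dvd D \<longrightarrow> is_unit c"
    and nz: "N \<noteq> 0" "D \<noteq> 0" and d: "d = max (degree N) (degree D)"
  shows "\<forall>c. c dvd revp d D \<and> c dvd revp d N \<longrightarrow> is_unit c"
proof (intro allI impI)
  fix c assume "c dvd revp d D \<and> c dvd revp d N"
  then have "c dvd revp d D" "c dvd revp d N" by auto
  then obtain u w where u: "revp d D = c * u" and w: "revp d N = c * w" by (metis dvdE)
  have dD: "degree D \<le> d" and dN: "degree N \<le> d" using d by auto
  have rD: "revp d D \<noteq> 0" using revp_ne0[OF dD nz(2)] .
  have rN: "revp d N \<noteq> 0" using revp_ne0[OF dN nz(1)] .
  have c0: "c \<noteq> 0" "u \<noteq> 0" "w \<noteq> 0" using rD rN u w by auto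
  define e where "e = degree c"
  have du: "e + degree u \<le> d"
    using degree_revp[of d D] u degree_mult_eq[OF c0(1,2)] by (simp add: e_def)
  have dw: "e + degree w \<le> d"
    using degree_revp[of d N] w degree_mult_eq[OF c0(1,3)] by (simp add: e_def)
  have "D = revp d (c * u)" using revp_revp[OF dD] u by simp
  also have "\<dots> = revp (e + (d - e)) (c * u)" using du by simp
  also have "\<dots> = revp e c * revp (d - e) u"
    by (rule revp_mult_int) (use du in \<open>auto simp: e_def\<close>)
  finally have D1: "revp e c dvd D" by simp
  have "N = revp d (c * w)" using revp_revp[OF dN] w by simp
  also have "\<dots> = revp (e + (d - e)) (c * w)" using dw by simp
  also have "\<dots> = revp e c * revp (d - e) w"
    by (rule revp_mult_int) (use dw in \<open>auto simp: e_def\<close>)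
  finally have N1: "revp e c dvd N" by simp
  have un: "is_unit (revp e c)" using cop D1 N1 by blast
  then obtain s where s: "revp e c = [:s:]" using is_unit_poly_iff by blast
  have e0: "e = 0"
  proof (rule ccontr)
    assume "e \<noteq> 0"
    have "coeff (revp e c) e = coeff c 0" by (simp add: coeff_revp)
    also have "coeff (revp e c) e = 0" using s \<open>e \<noteq> 0\<close> by (simp add: coeff_pCons split: nat.splits)
    finally have cc: "coeff c 0 = 0" ..
    have "coeff D d = coeff (revp d D) 0" by (simp add: coeff_revp)
    also have "\<dots> = 0" using u cc by (simp add: coeff_mult_0)
    finally have z1: "coeff D d = 0" .
    have "coeff N d = coeff (revp d N) 0" by (simp add: coeff_revp)
    also have "\<dots> = 0" using w cc by (simp add: coeff_mult_0)
    finally have z2: "coeff N d = 0" .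
    show False
    proof (cases "degree D \<le> degree N")
      case True
      then have "d = degree N" using d by simp
      then show False using z2 nz(1) by simp
    next
      case False
      then have "d = degree D" using d by simp
      then show False using z1 nz(2) by simp
    qed
  qed
  have "revp e c = c" using e0 revp0[of c] by (simp add: e_def)
  then show "is_unit c" using un by simp
qed

theorem corollary1:
  fixes m n :: nat
  assumes "m > 0" and "n > 0"
  defines "d \<equiv> max (degree (qN (of_nat m / of_nat n))) (degree (qD (of_nat m / of_nat n)))"
  shows "\<forall>q :: real. q \<noteq> 0 \<longrightarrow>
      poly (map_poly of_int (qN (of_nat n / of_nat m))) q
        = q ^ d * poly (map_poly of_int (qD (of_nat m / of_nat n))) (inverse q)
    \<and> poly (map_poly of_int (qD (of_nat n / of_nat m))) q
        = q ^ d * poly (map_poly of_int (qN (of_nat m / of_nat n))) (inverse q)"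
proof -
  obtain N D where sp: "spec (of_nat m / of_nat n) N D"
    and pos: "\<forall>t>0. 0 < poly (rp N) t \<and> 0 < poly (rp D) t"
    using spec_exists[OF assms(1,2)] by blast
  have qnd: "qND (of_nat m / of_nat n) = (N, D)" by (rule spec_qND[OF sp])
  have qN1: "qN (of_nat m / of_nat n) = N" and qD1: "qD (of_nat m / of_nat n) = D"
    using qnd by (simp_all add: qN_def qD_def)
  have dd: "d = max (degree N) (degree D)" by (simp add: d_def qN1 qD1)
  have lN: "0 < lead_coeff N" "0 < lead_coeff D" using sp by (auto simp: spec_def)
  have nz: "N \<noteq> 0" "D \<noteq> 0" using lN by auto
  have dN: "degree N \<le> d" and dD: "degree D \<le> d" using dd by auto
  have cop: "\<forall>c. c dvd N \<and> c dvd D \<longrightarrow> is_unit c" using sp by (simp add: spec_def)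
  have evr: "poly (rp (revp d P)) t = t ^ d * poly (rp P) (inverse t)" if "t \<noteq> 0" "degree P \<le> d" for P t
    using that by (simp add: map_poly_revp poly_revp)
  have posr: "0 < lead_coeff (revp d P)" if "\<forall>t>0. 0 < poly (rp P) t" "degree P \<le> d" for P
  proof -
    have "\<forall>t>0. 0 < poly (rp (revp d P)) t"
    proof (intro allI impI)
      fix t :: real assume t: "0 < t"
      then have "0 < inverse t" by simp
      then show "0 < poly (rp (revp d P)) t" using that t evr[of t P] by simp
    qed
    then have "0 < lead_coeff (rp (revp d P))" by (rule pos_lead)
    then have "(0::real) < of_int (lead_coeff (revp d P))" using lead_rp[of "revp d P"] by simp
    then show ?thesis by (simp only: of_int_0_less_iff)
  qed
  have sp2: "spec (of_nat n / of_nat m) (revp d D) (revp d N)"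
    unfolding spec_def
  proof (intro conjI)
    show "0 < lead_coeff (revp d D)" using posr[of D] pos dD by simp
    show "0 < lead_coeff (revp d N)" using posr[of N] pos dN by simp
    show "\<forall>c. c dvd revp d D \<and> c dvd revp d N \<longrightarrow> is_unit c"
      by (rule revp_coprime[OF cop nz dd])
    have "qrat (of_nat m / of_nat n) = Some (Fract (ip N) (ip D))" using sp by (simp add: spec_def)
    then have Vmn: "V m n = Fract (ip N) (ip D)" using qrat_pos[OF assms(1,2)] by simp
    have "qrat (of_nat n / of_nat m) = Some (V n m)" using qrat_pos[OF assms(2,1)] .
    also have "V n m = inverse (sig (V m n))" using V_recip[OF assms(1,2)] .
    also have "sig (V m n) = Fract (revp d (ip N)) (revp d (ip D))"
      unfolding Vmn by (rule sig_Fract) (use ip_ne0[OF nz(2)] dN dD in auto)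
    finally show "qrat (of_nat n / of_nat m) = Some (Fract (ip (revp d D)) (ip (revp d N)))"
      by (simp add: map_poly_revp)
  qed
  have qnd2: "qND (of_nat n / of_nat m) = (revp d D, revp d N)" by (rule spec_qND[OF sp2])
  have qN2: "qN (of_nat n / of_nat m) = revp d D" and qD2: "qD (of_nat n / of_nat m) = revp d N"
    using qnd2 by (simp_all add: qN_def qD_def)
  show ?thesis unfolding qN1 qD1 qN2 qD2 using evr dN dD by simp
qed

end
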